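(* Consider the queueing system in the context under MaxWeight with a diagonal matrix $\Delta$ with positive diagonal entries, in overload ($\rho\notin\mathcal{P}$), and let $\eta=\lim_{t\to\infty}X(t)/t$. Then $$\langle\eta,\Delta\eta\rangle=\langle\rho,\Delta\eta\rangle-\max_{S\in\mathcal{S}}\langle S,\Delta\eta\rangle.$$
   Context: Model: $Q$ queues, finite set $\mathcal{S}=\{S_1,\dots,S_N\}\subset\mathbb{R}^Q_{\ge0}$, discrete time. Arrivals $A(t)$ with $0\le A_q(t)\le\bar A_q<\infty$ and $\rho_q=\lim_{t\to\infty}\frac1t\sum_{s=0}^{t-1}A_q(s)\in(0,\infty)$. Departures $D_q(t)=\min\{S_q(t),X_q(t)\}$, $X(t+1)=X(t)+A(t)-D(t)$, $X(0)=0$, with $S(t)\in\arg\max_{S\in\mathcal{S}}\langle S,\Delta X(t)\rangle$. Stability region $\mathcal{P}=\{r\in\mathbb{R}^Q_{\ge0}: r\le\sum_n\alpha_nS_n\text{ for some }\alpha_n\ge0,\sum_n\alpha_n=1\}$. (Under these assumptions $\lim_t X(t)/t$ exists.) *)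

theory Defs
  imports Complex_Main
begin

definition ip :: "('q::finite \<Rightarrow> real) \<Rightarrow> ('q \<Rightarrow> real) \<Rightarrow> real" where
  "ip x y = (\<Sum>q\<in>UNIV. x q * y q)"

text \<open>Diagonal matrix Delta = diag(d) applied to a vector.\<close>
definition diag_apply :: "('q \<Rightarrow> real) \<Rightarrow> ('q \<Rightarrow> real) \<Rightarrow> ('q \<Rightarrow> real)" where
  "diag_apply d x = (\<lambda>q. d q * x q)"

definition stab_region :: "('q \<Rightarrow> real) set \<Rightarrow> ('q \<Rightarrow> real) set" where
  "stab_region Sch = {r. (\<forall>q. 0 \<le> r q) \<and>
      (\<exists>\<alpha>. (\<forall>S\<in>Sch. 0 \<le> \<alpha> S) \<and> (\<Sum>S\<in>Sch. \<alpha> S) = 1 \<and>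
            (\<forall>q. r q \<le> (\<Sum>S\<in>Sch. \<alpha> S * S q)))}"

end

theory Submission
  imports Defs
begin

lemma arith_aux:
  fixes a b c f M r :: real
  shows "a \<le> b \<Longrightarrow> \<bar>a - c\<bar> < r/2 \<Longrightarrow> \<bar>b - f\<bar> < r/2 \<Longrightarrow> f \<le> M \<Longrightarrow> c = M \<Longrightarrow> \<bar>f - M\<bar> < r"
  unfolding abs_less_iff by linarith

lemma cesaro0:
  fixes g :: "nat \<Rightarrow> real"
  assumes "g \<longlonglongrightarrow> 0"
  shows "(\<lambda>t. (\<Sum>s<t. g s) / real t) \<longlonglongrightarrow> 0"
proof (rule LIMSEQ_I)
  fix r :: real assume r: "0 < r"
  from LIMSEQ_D[OF assms, of "r/2"] r obtain N where N: "\<forall>n\<ge>N. norm (g n) < r/2" by auto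
  define C where "C = (\<Sum>s<N. \<bar>g s\<bar>)"
  have C0: "0 \<le> C" unfolding C_def by (simp add: sum_nonneg)
  define K where "K = Suc (N + nat \<lceil>2*C/r\<rceil>)"
  show "\<exists>no. \<forall>n\<ge>no. norm ((\<Sum>s<n. g s) / real n - 0) < r"
  proof (intro exI allI impI)
    fix n assume n: "K \<le> n"
    hence nN: "N \<le> n" and npos: "0 < real n" unfolding K_def by auto
    have "real n > 2*C/r" using n unfolding K_def by linarith
    hence Cn: "2*C < r * real n" using r by (simp add: field_simps)
    have split: "{..<n} = {..<N} \<union> {N..<n}" using nN by auto
    have a1: "\<bar>\<Sum>s<n. g s\<bar> \<le> (\<Sum>s<n. \<bar>g s\<bar>)" by (rule sum_abs)
    have a2: "(\<Sum>s<n. \<bar>g s\<bar>) = C + (\<Sum>s\<in>{N..<n}. \<bar>g s\<bar>)" unfolding C_def split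
      by (subst sum.union_disjoint) auto
    have a3: "(\<Sum>s\<in>{N..<n}. \<bar>g s\<bar>) \<le> (\<Sum>s\<in>{N..<n}. r/2)"
      by (rule sum_mono) (use N in auto)
    have a4: "(\<Sum>s\<in>{N..<n}. r/2) \<le> r * real n / 2" using r nN by simp
    have "\<bar>\<Sum>s<n. g s\<bar> < r * real n" using a1 a2 a3 a4 Cn by linarith
    thus "norm ((\<Sum>s<n. g s) / real n - 0) < r" using npos
      by (simp add: abs_divide field_simps)
  qed
qed

lemma cesaro:
  fixes f :: "nat \<Rightarrow> real"
  assumes "f \<longlonglongrightarrow> L"
  shows "(\<lambda>t. (\<Sum>s<t. f s) / real t) \<longlonglongrightarrow> L"
proof -
  have "(\<lambda>s. f s - L) \<longlonglongrightarrow> 0" using assms by (simp add: LIMSEQ_iff)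
  from cesaro0[OF this] have 1: "(\<lambda>t. (\<Sum>s<t. f s - L) / real t + L) \<longlonglongrightarrow> 0 + L"
    by (intro tendsto_add) auto
  have ev: "\<forall>\<^sub>F t in sequentially. (\<Sum>s<t. f s - L) / real t + L = (\<Sum>s<t. f s) / real t"
    by (rule eventually_sequentiallyI[of 1]) (simp add: sum_subtractf field_simps)
  show ?thesis using Lim_transform_eventually[OF 1 ev] by simp
qed

theorem lemma9:
  fixes Sch :: "('q::finite \<Rightarrow> real) set"
    and d :: "'q \<Rightarrow> real"
    and A :: "nat \<Rightarrow> 'q \<Rightarrow> real"
    and Abar \<rho> \<eta> :: "'q \<Rightarrow> real"
    and X Sel :: "nat \<Rightarrow> 'q \<Rightarrow> real"
  assumes Sch_fin: "finite Sch" and Sch_ne: "Sch \<noteq> {}"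
    and Sch_nonneg: "\<forall>S\<in>Sch. \<forall>q. 0 \<le> S q"
    and d_pos: "\<forall>q. 0 < d q"
    and A_bnd: "\<forall>t q. 0 \<le> A t q \<and> A t q \<le> Abar q"
    and rho_lim: "\<forall>q. (\<lambda>t. (\<Sum>s<t. A s q) / real t) \<longlonglongrightarrow> \<rho> q"
    and rho_pos: "\<forall>q. 0 < \<rho> q"
    and X0: "X 0 = (\<lambda>q. 0)"
    and X_step: "\<forall>t q. X (Suc t) q = X t q + A t q - min (Sel t q) (X t q)"
    and Sel_in: "\<forall>t. Sel t \<in> Sch"
    and Sel_max: "\<forall>t. \<forall>S\<in>Sch. ip S (diag_apply d (X t)) \<le> ip (Sel t) (diag_apply d (X t))"
    and overload: "\<rho> \<notin> stab_region Sch"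
    and eta_lim: "\<forall>q. (\<lambda>t. X t q / real t) \<longlonglongrightarrow> \<eta> q"
  shows "ip \<eta> (diag_apply d \<eta>) =
         ip \<rho> (diag_apply d \<eta>) - Max ((\<lambda>S. ip S (diag_apply d \<eta>)) ` Sch)"
proof -
  define B where "B q = Max ((\<lambda>S. S q) ` Sch)" for q
  define D where "D t q = min (Sel t q) (X t q)" for t q
  define e where "e = diag_apply d \<eta>"
  define M where "M = Max ((\<lambda>S. ip S e) ` Sch)"
  have e_def': "e q = d q * \<eta> q" for q unfolding e_def diag_apply_def by simp
  have Xnn: "0 \<le> X t q" for t q
  proof (induction t)
    case 0 then show ?case using X0 by simp
  next
    case (Suc t) then show ?case using X_step A_bnd
      by (smt (verit, best) min.cobounded2)
  qed
  have Xsum: "X t q = (\<Sum>s<t. A s q) - (\<Sum>s<t. D s q)" for t q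
    by (induction t) (simp_all add: X0 X_step D_def)
  have eta_nn: "0 \<le> \<eta> q" for q
    using eta_lim by (intro LIMSEQ_le_const[of "\<lambda>t. X t q / real t"]) (use Xnn in auto)
  have SleB: "S q \<le> B q" if "S \<in> Sch" for S q
    unfolding B_def using Sch_fin that by (intro Max_ge) auto
  have evq: "\<forall>\<^sub>F t in sequentially. D t q * e q = Sel t q * e q" for q
  proof (cases "\<eta> q = 0")
    case True then show ?thesis by (simp add: e_def')
  next
    case False
    hence pos: "0 < \<eta> q" using eta_nn[of q] by simp
    have ev1: "\<forall>\<^sub>F t in sequentially. \<eta> q / 2 < X t q / real t"
      using eta_lim pos by (intro order_tendstoD(1)) auto
    have ev2: "\<forall>\<^sub>F t in sequentially. 2 * \<bar>B q\<bar> / \<eta> q + 1 \<le> real t"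
      by (rule eventually_sequentiallyI[of "nat \<lceil>2 * \<bar>B q\<bar> / \<eta> q + 1\<rceil>"]) linarith
    show ?thesis using ev1 ev2
    proof eventually_elim
      case (elim t)
      have tpos: "0 < real t" using elim(2) pos by (smt (verit) divide_nonneg_pos abs_ge_zero)
      have "\<eta> q / 2 * real t < X t q" using elim(1) tpos by (simp add: field_simps)
      moreover have "\<bar>B q\<bar> \<le> \<eta> q / 2 * real t"
      proof -
        have "2 * \<bar>B q\<bar> / \<eta> q \<le> real t" using elim(2) by linarith
        thus ?thesis using pos by (simp add: field_simps)
      qed
      ultimately have "Sel t q \<le> X t q" using SleB[OF Sel_in[rule_format, of t], of q] by linarith
      thus ?case by (simp add: D_def)
    qed
  qed
  have evall: "\<forall>\<^sub>F t in sequentially. ip (D t) e = ip (Sel t) e"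
    using eventually_all_finite[where P="\<lambda>t q. D t q * e q = Sel t q * e q", OF evq] by eventually_elim (unfold ip_def, rule sum.cong, auto)
  have Mmem: "M \<in> (\<lambda>S. ip S e) ` Sch" unfolding M_def using Sch_fin Sch_ne by (intro Max_in) auto
  then obtain S0 where S0: "S0 \<in> Sch" "ip S0 e = M" by auto
  have Mge: "ip S e \<le> M" if "S \<in> Sch" for S
    unfolding M_def using Sch_fin that by (intro Max_ge) auto
  have ipconv: "(\<lambda>t. ip S (diag_apply d (\<lambda>q. X t q / real t))) \<longlonglongrightarrow> ip S e" for S
    unfolding ip_def e_def diag_apply_def
    by (intro tendsto_intros) (use eta_lim in auto)
  have ipscale: "ip S (diag_apply d (\<lambda>q. X t q / real t)) = ip S (diag_apply d (X t)) / real t" for S t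
    unfolding ip_def diag_apply_def by (simp add: sum_divide_distrib)
  have selconv: "(\<lambda>t. ip (Sel t) e) \<longlonglongrightarrow> M"
  proof (rule LIMSEQ_I)
    fix r :: real assume r: "0 < r"
    have "\<forall>\<^sub>F t in sequentially. \<forall>S\<in>Sch. dist (ip S (diag_apply d (\<lambda>q. X t q / real t))) (ip S e) < r/2"
      using Sch_fin r by (intro eventually_ball_finite ballI tendstoD[OF ipconv]) auto
    moreover have "\<forall>\<^sub>F t in sequentially. 1 \<le> t" by (rule eventually_ge_at_top)
    ultimately have "\<forall>\<^sub>F t in sequentially. norm (ip (Sel t) e - M) < r"
    proof eventually_elim
      case (elim t)
      let ?Y = "diag_apply d (\<lambda>q. X t q / real t)"
      have tpos: "0 < real t" using elim(2) by simp
      have "ip S0 ?Y \<le> ip (Sel t) ?Y"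
        unfolding ipscale using Sel_max S0(1) tpos by (simp add: divide_right_mono)
      moreover have "dist (ip S0 ?Y) (ip S0 e) < r/2" using elim(1) S0(1) by auto
      moreover have "dist (ip (Sel t) ?Y) (ip (Sel t) e) < r/2" using elim(1) Sel_in by auto
      moreover have "ip (Sel t) e \<le> M" using Mge Sel_in by auto
      ultimately show ?case using S0(2) unfolding dist_real_def real_norm_def by (rule arith_aux)
    qed
    thus "\<exists>no. \<forall>n\<ge>no. norm (ip (Sel n) e - M) < r" by (simp add: eventually_sequentially)
  qed
  have Dconv: "(\<lambda>t. ip (D t) e) \<longlonglongrightarrow> M"
    using Lim_transform_eventually[OF selconv] evall by (simp add: eventually_mono)
  have c1: "(\<lambda>t. (\<Sum>s<t. ip (D s) e) / real t) \<longlonglongrightarrow> M" by (rule cesaro[OF Dconv])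
  have eq: "(\<Sum>s<t. ip (D s) e) / real t = (\<Sum>q\<in>UNIV. ((\<Sum>s<t. A s q) / real t - X t q / real t) * e q)" for t
  proof -
    have "(\<Sum>s<t. ip (D s) e) = (\<Sum>q\<in>UNIV. (\<Sum>s<t. D s q) * e q)"
      unfolding ip_def by (subst sum.swap) (simp add: sum_distrib_right)
    also have "\<dots> = (\<Sum>q\<in>UNIV. ((\<Sum>s<t. A s q) - X t q) * e q)"
      using Xsum by simp
    finally have h: "(\<Sum>s<t. ip (D s) e) = (\<Sum>q\<in>UNIV. ((\<Sum>s<t. A s q) - X t q) * e q)" .
    have "(\<Sum>q\<in>UNIV. ((\<Sum>s<t. A s q) - X t q) * e q) / real t
       = (\<Sum>q\<in>UNIV. ((\<Sum>s<t. A s q) - X t q) * e q / real t)"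
      by (rule sum_divide_distrib)
    also have "\<dots> = (\<Sum>q\<in>UNIV. ((\<Sum>s<t. A s q) / real t - X t q / real t) * e q)"
      by (rule sum.cong) (simp_all only: diff_divide_distrib[symmetric] times_divide_eq_left)
    finally show ?thesis unfolding h .
  qed
  have c2: "(\<lambda>t. (\<Sum>s<t. ip (D s) e) / real t) \<longlonglongrightarrow> (\<Sum>q\<in>UNIV. (\<rho> q - \<eta> q) * e q)"
    unfolding eq using rho_lim eta_lim by (intro tendsto_intros) auto
  have "(\<Sum>q\<in>UNIV. (\<rho> q - \<eta> q) * e q) = M" using LIMSEQ_unique[OF c2 c1] .
  hence "ip \<rho> e - ip \<eta> e = M" unfolding ip_def by (simp add: left_diff_distrib sum_subtractf)
  thus ?thesis unfolding M_def e_def by simp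
qed

end
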